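(* Let $p\in[1,\infty]$, $W^{(1)}\in\mathbb{R}^{n_1\times n_0}$, $W^{(2)}\in\mathbb{R}^{n_2\times n_1}$, and let $\alpha,\beta\in\mathbb{R}^{n_1}$ satisfy $0\le\alpha_i\le\beta_i<\infty$ for all $i$. For $d\in\mathbb{R}^{n_1}_+$ define $$L(d)=\|W^{(2)}\|_p\,\big\|\mathrm{diag}\big(\max(|\beta-d|,|d-\alpha|)\big)W^{(1)}\big\|_p+\|W^{(2)}\mathrm{diag}(d)W^{(1)}\|_p,$$ with $\max$ and $|\cdot|$ taken elementwise. Then $L(\beta/2)\le L(0)$.
   Context: $\|A\|_p=\sup_{\|x\|_p\le1}\|Ax\|_p$ denotes the induced operator norm of a matrix $A$. (In the paper, $L(d)$ is a Lipschitz constant of the two-layer network $x\mapsto W^{(2)}\sigma(W^{(1)}x)$ whose activations $\sigma_i$ are slope-restricted in $[\alpha_i,\beta_i]$, and $L(0)=\|W^{(2)}\|_p\|\mathrm{diag}(\beta)W^{(1)}\|_p$ is the naive bound.) *)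

theory Defs
  imports "HOL-Analysis.Analysis"
begin

definition vpnorm :: "ereal \<Rightarrow> real^'n \<Rightarrow> real" where
  "vpnorm p x = (if p = \<infinity> then Max (range (\<lambda>i. \<bar>x $ i\<bar>))
     else (\<Sum>i\<in>UNIV. \<bar>x $ i\<bar> powr real_of_ereal p) powr (1 / real_of_ereal p))"

definition oppnorm :: "ereal \<Rightarrow> real^'n^'m \<Rightarrow> real" where
  "oppnorm p A = Sup ((\<lambda>x. vpnorm p (A *v x)) ` {x. vpnorm p x \<le> 1})"

definition diagm :: "real^'n \<Rightarrow> real^'n^'n" where
  "diagm v = (\<chi> i j. if i = j then v $ i else 0)"

definition Lbound :: "ereal \<Rightarrow> real^'n0^'n1 \<Rightarrow> real^'n1^'n2 \<Rightarrow> real^'n1 \<Rightarrow> real^'n1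
     \<Rightarrow> real^'n1 \<Rightarrow> real" where
  "Lbound p W1 W2 \<alpha> \<beta> d =
     oppnorm p W2 * oppnorm p (diagm (\<chi> i. max \<bar>\<beta> $ i - d $ i\<bar> \<bar>d $ i - \<alpha> $ i\<bar>) ** W1)
     + oppnorm p (W2 ** diagm d ** W1)"

end

theory Submission
  imports Defs
begin

lemma p_cases:
  assumes "1 \<le> p" "p \<noteq> \<infinity>"
  shows "p = ereal (real_of_ereal p)" "1 \<le> real_of_ereal p"
  using assms by (cases p; auto)+

lemma vp_abs_le:
  fixes x :: "real^'n"
  assumes "1 \<le> p"
  shows "\<bar>x $ i\<bar> \<le> vpnorm p x"
proof (cases "p = \<infinity>")
  case True
  then show ?thesis by (simp add: vpnorm_def)
next
  case False
  define q where "q = real_of_ereal p"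
  have q: "1 \<le> q" using p_cases[OF assms False] q_def by simp
  have "\<bar>x $ i\<bar> = (\<bar>x $ i\<bar> powr q) powr (1/q)"
    using q by (simp add: powr_powr)
  also have "\<dots> \<le> (\<Sum>j\<in>UNIV. \<bar>x $ j\<bar> powr q) powr (1/q)"
    using q by (intro powr_mono2) (auto intro: member_le_sum)
  finally show ?thesis using False by (simp add: vpnorm_def q_def)
qed

lemma vp_nonneg:
  fixes x :: "real^'n"
  assumes "1 \<le> p"
  shows "0 \<le> vpnorm p x"
  using vp_abs_le[OF assms, of x] abs_ge_zero order_trans by blast

lemma vp_zero_iff:
  fixes x :: "real^'n"
  assumes "1 \<le> p" "vpnorm p x = 0"
  shows "x = 0"
  using vp_abs_le[OF assms(1), of x] assms(2) by (simp add: vec_eq_iff)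

lemma vp_scale:
  fixes x :: "real^'n"
  assumes "1 \<le> p"
  shows "vpnorm p (c *\<^sub>R x) = \<bar>c\<bar> * vpnorm p x"
proof (cases "p = \<infinity>")
  case True
  have "Max (range (\<lambda>i. \<bar>(c *\<^sub>R x) $ i\<bar>)) = Max ((\<lambda>t. \<bar>c\<bar> * t) ` range (\<lambda>i. \<bar>x $ i\<bar>))"
    by (simp add: image_image abs_mult)
  also have "\<dots> = \<bar>c\<bar> * Max (range (\<lambda>i. \<bar>x $ i\<bar>))"
    by (rule mono_Max_commute[symmetric]) (auto simp: mono_def mult_left_mono)
  finally show ?thesis using True by (simp add: vpnorm_def)
next
  case False
  define q where "q = real_of_ereal p"
  have q: "1 \<le> q" using p_cases[OF assms False] q_def by simp
  have "(\<Sum>j\<in>UNIV. \<bar>(c *\<^sub>R x) $ j\<bar> powr q) = \<bar>c\<bar> powr q * (\<Sum>j\<in>UNIV. \<bar>x $ j\<bar> powr q)"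
    by (simp add: abs_mult powr_mult sum_distrib_left)
  then have "(\<Sum>j\<in>UNIV. \<bar>(c *\<^sub>R x) $ j\<bar> powr q) powr (1/q)
      = (\<bar>c\<bar> powr q) powr (1/q) * (\<Sum>j\<in>UNIV. \<bar>x $ j\<bar> powr q) powr (1/q)"
    by (simp add: powr_mult sum_nonneg)
  also have "(\<bar>c\<bar> powr q) powr (1/q) = \<bar>c\<bar>" using q by (simp add: powr_powr)
  finally show ?thesis using False by (simp add: vpnorm_def q_def)
qed

lemma vp_bound:
  fixes y :: "real^'n"
  assumes "1 \<le> p" "\<And>i. \<bar>y $ i\<bar> \<le> K"
  shows "vpnorm p y \<le> (if p = \<infinity> then K else
     (real CARD('n) * K powr real_of_ereal p) powr (1 / real_of_ereal p))"
proof (cases "p = \<infinity>")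
  case True
  then show ?thesis using assms(2) by (simp add: vpnorm_def)
next
  case False
  define q where "q = real_of_ereal p"
  have q: "1 \<le> q" using p_cases[OF assms(1) False] q_def by simp
  have "(\<Sum>j\<in>UNIV. \<bar>y $ j\<bar> powr q) \<le> (\<Sum>j\<in>(UNIV::'n set). K powr q)"
    using q assms(2) by (intro sum_mono powr_mono2) auto
  then have "(\<Sum>j\<in>UNIV. \<bar>y $ j\<bar> powr q) powr (1/q) \<le> (real CARD('n) * K powr q) powr (1/q)"
    using q by (intro powr_mono2) (auto simp: sum_nonneg)
  then show ?thesis using False by (simp add: vpnorm_def q_def)
qed

lemma mv_bound:
  fixes A :: "real^'n^'m" and x :: "real^'n"
  assumes "\<And>j. \<bar>x $ j\<bar> \<le> 1"
  shows "\<bar>(A *v x) $ i\<bar> \<le> (\<Sum>i\<in>UNIV. \<Sum>j\<in>UNIV. \<bar>A $ i $ j\<bar>)"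
proof -
  have "\<bar>(A *v x) $ i\<bar> \<le> (\<Sum>j\<in>UNIV. \<bar>A $ i $ j * x $ j\<bar>)"
    by (simp add: matrix_vector_mult_def sum_abs)
  also have "\<dots> \<le> (\<Sum>j\<in>UNIV. \<bar>A $ i $ j\<bar>)"
    using assms by (intro sum_mono) (simp add: abs_mult mult_left_le)
  also have "\<dots> \<le> (\<Sum>i\<in>UNIV. \<Sum>j\<in>UNIV. \<bar>A $ i $ j\<bar>)"
    by (rule member_le_sum) (auto intro: sum_nonneg)
  finally show ?thesis .
qed

lemma op_bdd:
  fixes A :: "real^'n^'m"
  assumes "1 \<le> p"
  shows "bdd_above ((\<lambda>x. vpnorm p (A *v x)) ` {x. vpnorm p x \<le> 1})"
proof -
  let ?K = "(\<Sum>i\<in>UNIV. \<Sum>j\<in>UNIV. \<bar>A $ i $ j\<bar>)"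
  show ?thesis
  proof (rule bdd_aboveI2)
    fix x :: "real^'n" assume "x \<in> {x. vpnorm p x \<le> 1}"
    then have "\<And>j. \<bar>x $ j\<bar> \<le> 1" using vp_abs_le[OF assms, of x] by (meson mem_Collect_eq order_trans)
    then show "vpnorm p (A *v x) \<le> (if p = \<infinity> then ?K else
     (real CARD('m) * ?K powr real_of_ereal p) powr (1 / real_of_ereal p))"
      by (intro vp_bound[OF assms] mv_bound)
  qed
qed

lemma vp_zero: "1 \<le> p \<Longrightarrow> vpnorm p (0::real^'n) = 0"
  using vp_scale[of p 0 "0::real^'n"] by simp

lemma op_upper:
  fixes A :: "real^'n^'m"
  assumes "1 \<le> p" "vpnorm p x \<le> 1"
  shows "vpnorm p (A *v x) \<le> oppnorm p A"
  unfolding oppnorm_def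
proof (rule cSup_upper)
  show "vpnorm p (A *v x) \<in> (\<lambda>x. vpnorm p (A *v x)) ` {x. vpnorm p x \<le> 1}"
    using assms(2) by blast
  show "bdd_above ((\<lambda>x. vpnorm p (A *v x)) ` {x. vpnorm p x \<le> 1})"
    by (rule op_bdd[OF assms(1)])
qed

lemma op_least:
  fixes A :: "real^'n^'m"
  assumes "\<And>x. vpnorm p x \<le> 1 \<Longrightarrow> vpnorm p (A *v x) \<le> C" "1 \<le> p"
  shows "oppnorm p A \<le> C"
proof -
  have "0 \<in> {x::real^'n. vpnorm p x \<le> 1}" using vp_zero[OF assms(2), where 'n='n] by simp
  then have ne: "(\<lambda>x. vpnorm p (A *v x)) ` {x. vpnorm p x \<le> 1} \<noteq> {}" by blast
  show ?thesis unfolding oppnorm_def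
  proof (rule cSup_least[OF ne])
    fix y assume "y \<in> (\<lambda>x. vpnorm p (A *v x)) ` {x. vpnorm p x \<le> 1}"
    then obtain x where "vpnorm p x \<le> 1" "y = vpnorm p (A *v x)" by blast
    then show "y \<le> C" using assms(1) by simp
  qed
qed

lemma op_nonneg:
  fixes A :: "real^'n^'m"
  assumes "1 \<le> p"
  shows "0 \<le> oppnorm p A"
proof -
  have "vpnorm p (A *v 0) \<le> oppnorm p A" by (rule op_upper[OF assms]) (simp add: vp_zero[OF assms])
  then show ?thesis using vp_nonneg[OF assms, of "A *v 0"] by linarith
qed

lemma op_vec:
  fixes A :: "real^'n^'m"
  assumes "1 \<le> p"
  shows "vpnorm p (A *v y) \<le> oppnorm p A * vpnorm p y"
proof (cases "vpnorm p y = 0")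
  case True
  then have "y = 0" using vp_zero_iff[OF assms] by blast
  then show ?thesis using vp_zero[OF assms, where 'n='m] True by simp
next
  case False
  define t where "t = vpnorm p y"
  have t: "0 < t" using False vp_nonneg[OF assms, of y] t_def by simp
  have "vpnorm p ((1/t) *\<^sub>R y) = 1" using t by (simp add: vp_scale[OF assms] t_def)
  then have "vpnorm p (A *v ((1/t) *\<^sub>R y)) \<le> oppnorm p A"
    by (intro op_upper[OF assms]) simp
  then have "(1/t) * vpnorm p (A *v y) \<le> oppnorm p A"
    using t by (simp add: matrix_scaleR_vector_ac vp_scale[OF assms] scaleR_matrix_vector_assoc[symmetric])
  then show ?thesis using t by (simp add: t_def field_simps)
qed

lemma op_mult:
  fixes A :: "real^'n^'m" and B :: "real^'k^'n"
  assumes "1 \<le> p"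
  shows "oppnorm p (A ** B) \<le> oppnorm p A * oppnorm p B"
proof (rule op_least[OF _ assms])
  fix x :: "real^'k" assume x: "vpnorm p x \<le> 1"
  have "vpnorm p ((A ** B) *v x) = vpnorm p (A *v (B *v x))"
    by (simp add: matrix_vector_mul_assoc)
  also have "\<dots> \<le> oppnorm p A * vpnorm p (B *v x)" by (rule op_vec[OF assms])
  also have "\<dots> \<le> oppnorm p A * oppnorm p B"
    by (intro mult_left_mono op_upper[OF assms x] op_nonneg[OF assms])
  finally show "vpnorm p ((A ** B) *v x) \<le> oppnorm p A * oppnorm p B" .
qed

lemma op_scale:
  fixes A :: "real^'n^'m"
  assumes "1 \<le> p"
  shows "oppnorm p (c *\<^sub>R A) \<le> \<bar>c\<bar> * oppnorm p A"
proof (rule op_least[OF _ assms])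
  fix x :: "real^'n" assume x: "vpnorm p x \<le> 1"
  have "vpnorm p ((c *\<^sub>R A) *v x) = \<bar>c\<bar> * vpnorm p (A *v x)"
    by (simp add: scaleR_matrix_vector_assoc[symmetric] vp_scale[OF assms])
  also have "\<dots> \<le> \<bar>c\<bar> * oppnorm p A"
    by (intro mult_left_mono op_upper[OF assms x]) auto
  finally show "vpnorm p ((c *\<^sub>R A) *v x) \<le> \<bar>c\<bar> * oppnorm p A" .
qed

theorem theorem1:
  fixes p :: ereal
    and W1 :: "real^'n0^'n1" and W2 :: "real^'n1^'n2"
    and \<alpha> \<beta> :: "real^'n1"
  assumes "1 \<le> p"
    and "\<And>i. 0 \<le> \<alpha> $ i" and "\<And>i. \<alpha> $ i \<le> \<beta> $ i"
  shows "Lbound p W1 W2 \<alpha> \<beta> ((1/2) *\<^sub>R \<beta>) \<le> Lbound p W1 W2 \<alpha> \<beta> 0"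
proof -
  define B where "B = diagm \<beta> ** W1"
  define H where "H = (1/2::real) *\<^sub>R B"
  have e1: "(\<chi> i. max \<bar>\<beta> $ i - ((1/2) *\<^sub>R \<beta>) $ i\<bar> \<bar>((1/2) *\<^sub>R \<beta>) $ i - \<alpha> $ i\<bar>) = (1/2::real) *\<^sub>R \<beta>" (is "?l = ?r")
  proof (rule vec_eq_iff[THEN iffD2, rule_format])
    fix i
    show "?l $ i = ?r $ i" using assms(2)[of i] assms(3)[of i] by (auto simp: max_def abs_if)
  qed
  have e2: "(\<chi> i. max \<bar>\<beta> $ i - (0::real^'n1) $ i\<bar> \<bar>(0::real^'n1) $ i - \<alpha> $ i\<bar>) = \<beta>" (is "?l = ?r")
  proof (rule vec_eq_iff[THEN iffD2, rule_format])
    fix i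
    show "?l $ i = ?r $ i" using assms(2)[of i] assms(3)[of i] by (auto simp: max_def abs_if)
  qed
  have e3: "diagm ((1/2::real) *\<^sub>R \<beta>) ** W1 = H"
  proof -
    have "diagm ((1/2::real) *\<^sub>R \<beta>) = (1/2::real) *\<^sub>R diagm \<beta>"
      by (simp add: vec_eq_iff diagm_def)
    then show ?thesis unfolding H_def B_def by (simp add: scalar_matrix_assoc)
  qed
  have e4: "W2 ** diagm ((1/2::real) *\<^sub>R \<beta>) ** W1 = W2 ** H"
    using e3 by (simp add: matrix_mul_assoc[symmetric])
  have hB: "oppnorm p H \<le> (1/2) * oppnorm p B"
    using op_scale[OF assms(1), of "1/2" B] by (simp add: H_def)
  have "oppnorm p (W2 ** H) \<le> oppnorm p W2 * oppnorm p H" by (rule op_mult[OF assms(1)])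
  then have "Lbound p W1 W2 \<alpha> \<beta> ((1/2) *\<^sub>R \<beta>) \<le> 2 * (oppnorm p W2 * oppnorm p H)"
    unfolding Lbound_def e1 e3 e4 by (simp add: mult.commute)
  also have "\<dots> \<le> oppnorm p W2 * oppnorm p B"
    using mult_left_mono[OF hB op_nonneg[OF assms(1), of W2]] by simp
  also have "\<dots> \<le> Lbound p W1 W2 \<alpha> \<beta> 0"
    unfolding Lbound_def e2 B_def using op_nonneg[OF assms(1)] by simp
  finally show ?thesis .
qed

end
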